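(* Let $F$ be the standard normal distribution, $N\ge K+2$, $K\ge1$, and $Y_1,\dots,Y_N$ i.i.d. standard normal (indices modulo $N$). Define $t:=N^{-1/2}\sum_{j=1}^NY_j$ and $$X_j:=\frac{\sum_{i=j}^{j+K}Y_i-\frac{K+1}{\sqrt N}\,t}{\sqrt{K+1}},\qquad 1\le j\le N .$$ Let $G_2$ be the event $\{\max_{1\le j\le N}|X_j|\le1\}$. Then $\log\mathbb P(G_2)\ge-\frac{\pi^2}{2}\frac NK$. *)

theory Defs
  imports "HOL-Probability.Probability"
begin

text \<open>Joint law of N i.i.d. standard normal variables Y_0, ..., Y_(N-1)
  (0-based indices); the coordinate omega i plays the role of Y_(i+1).\<close>
definition iid_std_normal :: "nat \<Rightarrow> (nat \<Rightarrow> real) measure" where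
  "iid_std_normal N = PiM {..<N} (\<lambda>_. density lborel std_normal_density)"

definition t_stat :: "nat \<Rightarrow> (nat \<Rightarrow> real) \<Rightarrow> real" where
  "t_stat N Y = (\<Sum>j<N. Y j) / sqrt (real N)"

text \<open>X_j with indices taken modulo N (0-based j).\<close>
definition X_var :: "nat \<Rightarrow> nat \<Rightarrow> (nat \<Rightarrow> real) \<Rightarrow> nat \<Rightarrow> real" where
  "X_var N K Y j = ((\<Sum>i=j..j+K. Y (i mod N)) - (real K + 1) / sqrt (real N) * t_stat N Y)
                   / sqrt (real K + 1)"

definition G2_event :: "nat \<Rightarrow> nat \<Rightarrow> (nat \<Rightarrow> real) set" where
  "G2_event N K = {Y \<in> space (iid_std_normal N). \<forall>j<N. \<bar>X_var N K Y j\<bar> \<le> 1}"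

end

theory Submission
  imports Defs "HOL-Probability.Probability"
begin

lemma gauss_cos_sin:
  fixes t :: real
  shows "(LINT y|lborel. std_normal_density y * cos (t*y)) = exp (-(t^2)/2)"
    "(LINT y|lborel. std_normal_density y * sin (t*y)) = 0"
proof -
  interpret p: prob_space "density lborel std_normal_density"
    by (rule prob_space_normal_density) simp
  have int: "integrable (density lborel std_normal_density) (\<lambda>x. iexp (t*x))"
    by (rule p.integrable_iexp) auto
  have "char std_normal_distribution t = exp (-(t^2)/2)"
    by (simp add: char_std_normal_distribution)
  then have c: "(CLINT x|density lborel std_normal_density. iexp (t*x)) = exp (-(t^2)/2)"
    by (simp add: char_def)
  have "Re (CLINT x|density lborel std_normal_density. iexp (t*x)) = (LINT x|density lborel std_normal_density. cos (t*x))"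
    using int by (subst integral_Re[OF int, symmetric]) (simp add: Re_exp)
  moreover have "Im (CLINT x|density lborel std_normal_density. iexp (t*x)) = (LINT x|density lborel std_normal_density. sin (t*x))"
    using int by (subst integral_Im[OF int, symmetric]) (simp add: Im_exp)
  ultimately have 1: "(LINT x|density lborel std_normal_density. cos (t*x)) = exp (-(t^2)/2)"
     and 2: "(LINT x|density lborel std_normal_density. sin (t*x)) = 0"
    using c by (metis Re_complex_of_real, metis Im_complex_of_real)
  show "(LINT y|lborel. std_normal_density y * cos (t*y)) = exp (-(t^2)/2)"
    using 1 by (subst (asm) integral_density) auto
  show "(LINT y|lborel. std_normal_density y * sin (t*y)) = 0"
    using 2 by (subst (asm) integral_density) auto
qed

lemma integrable_normal_bounded:
  fixes f :: "real \<Rightarrow> real"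
  assumes [measurable]: "f \<in> borel_measurable borel" and b: "\<And>z. \<bar>f z\<bar> \<le> 1" and s: "0 < s"
  shows "integrable lborel (\<lambda>z. normal_density x s z * f z)"
proof (rule Bochner_Integration.integrable_bound)
  show "integrable lborel (normal_density x s)" using s by simp
  show "AE z in lborel. norm (normal_density x s z * f z) \<le> norm (normal_density x s z)"
    using b by (auto simp: abs_mult intro!: mult_left_le)
qed auto

lemma gauss_cos_shift:
  fixes x s w :: real assumes s: "s > 0"
  shows "(LINT z|lborel. normal_density x s z * cos (w*z)) = exp (- ((w * s)\<^sup>2) / 2) * cos (w*x)"
proof -
  have "(LINT z|lborel. normal_density x s z * cos (w*z))
      = \<bar>s\<bar> *\<^sub>R (LINT y|lborel. normal_density x s (x + s * y) * cos (w*(x + s * y)))"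
    using s by (intro lborel_integral_real_affine) simp
  also have "\<dots> = (LINT y|lborel. cos (w*x) * (std_normal_density y * cos ((w * s)*y))
                    - sin (w*x) * (std_normal_density y * sin ((w * s)*y)))"
  proof -
    have "\<And>y. normal_density x s (x + s * y) = std_normal_density y / s"
      using s by (simp add: normal_density_def power_mult_distrib real_sqrt_mult field_simps)
    then show ?thesis using s
      by (simp add: cos_add distrib_left algebra_simps flip: integral_mult_right_zero)
  qed
  also have "\<dots> = cos (w*x) * exp (- ((w * s)\<^sup>2) / 2) - sin (w*x) * 0"
    apply (subst Bochner_Integration.integral_diff)
      apply (intro integrable_mult_right integrable_normal_bounded; simp)+
    apply (simp only: integral_mult_right_zero gauss_cos_sin)
    done
  finally show ?thesis by simp
qed

lemma normal_density_deriv: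
  assumes s: "s > 0"
  shows "(normal_density x s has_real_derivative (normal_density x s z * (-(z - x) / s^2))) (at z within S)"
proof -
  define C where "C = 1 / sqrt (2 * pi * s\<^sup>2)"
  have nd: "normal_density x s = (\<lambda>z. C * exp (-(z - x)\<^sup>2 / (2 * s\<^sup>2)))"
    by (simp add: normal_density_def C_def fun_eq_iff)
  have "((\<lambda>z. C * exp (-(z - x)\<^sup>2 / (2 * s\<^sup>2))) has_real_derivative
     C * (exp (-(z - x)\<^sup>2 / (2 * s\<^sup>2)) * (-(z - x) / s\<^sup>2))) (at z within S)"
    using s by (auto intro!: derivative_eq_intros simp: power2_eq_square field_simps)
  then show ?thesis unfolding nd by (simp add: ac_simps)
qed

lemma tail_finite:
  fixes a b x s :: real
  assumes a: "a > 0" and xa: "x \<le> a" and ab: "a \<le> b" and s: "s > 0"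
  shows "integral {a..b} (\<lambda>z. normal_density x s z * cos (pi / (2*a) * z)) \<le> 0"
proof -
  define w where "w = pi / (2*a)"
  have w: "w > 0" using a by (simp add: w_def)
  define H where "H z = (sin (w * z) - 1) / w" for z
  define rho' where "rho' z = normal_density x s z * (-(z - x) / s^2)" for z
  define F where "F z = H z * normal_density x s z" for z
  have H0: "H z \<le> 0" for z using w by (simp add: H_def divide_nonpos_pos)
  have Ha: "H a = 0" using a by (simp add: H_def w_def)
  have derF: "(F has_vector_derivative (normal_density x s z * cos (w * z) + H z * rho' z)) (at z within {a..b})" for z
  proof -
    have "(H has_real_derivative cos (w * z)) (at z within {a..b})"
      unfolding H_def using w
      by (auto intro!: derivative_eq_intros)
    from DERIV_mult[OF this normal_density_deriv[OF s, of x z "{a..b}"]]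
    show ?thesis unfolding F_def has_real_derivative_iff_has_vector_derivative[symmetric] rho'_def
      by (simp add: algebra_simps)
  qed
  have I: "((\<lambda>z. normal_density x s z * cos (w * z) + H z * rho' z) has_integral (F b - F a)) {a..b}"
    by (rule fundamental_theorem_of_calculus[OF ab derF])
  have cont: "continuous_on {a..b} (\<lambda>z. H z * rho' z)"
    unfolding H_def rho'_def normal_density_def using s by (intro continuous_intros) (use w s in \<open>auto\<close>)
  have I2: "(\<lambda>z. H z * rho' z) integrable_on {a..b}"
    by (rule integrable_continuous_interval[OF cont])
  have I3: "integral {a..b} (\<lambda>z. H z * rho' z) \<ge> 0"
  proof (rule integral_nonneg[OF I2])
    fix z assume z: "z \<in> {a..b}"
    then have "rho' z \<le> 0" using xa s
      by (auto simp: rho'_def intro!: mult_nonneg_nonpos divide_nonpos_pos)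
    then show "0 \<le> H z * rho' z" using H0[of z] by (simp add: mult_nonpos_nonpos)
  qed
  have I1: "(\<lambda>z. normal_density x s z * cos (w * z)) integrable_on {a..b}"
    unfolding normal_density_def by (intro integrable_continuous_interval continuous_intros) (use s in auto)
  have "integral {a..b} (\<lambda>z. normal_density x s z * cos (w * z)) =
        (F b - F a) - integral {a..b} (\<lambda>z. H z * rho' z)"
    using integral_add[OF I1 I2] I by (simp add: integral_unique)
  also have "\<dots> \<le> F b" using I3 Ha by (simp add: F_def)
  also have "F b \<le> 0" using H0[of b] by (simp add: F_def mult_nonpos_nonneg)
  finally show ?thesis by (simp add: w_def)
qed

lemma integrable_ndc:
  assumes s: "s > 0"
  shows "integrable lborel (\<lambda>z. normal_density x s z * cos (w * z))"
  by (rule integrable_normal_bounded) (use s in auto)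

lemma tail_right:
  fixes a x s :: real
  assumes a: "a > 0" and xa: "x \<le> a" and s: "s > 0"
  shows "(LINT z|lborel. indicator {a<..} z * (normal_density x s z * cos (pi / (2*a) * z))) \<le> 0"
proof -
  define f where "f z = normal_density x s z * cos (pi / (2*a) * z)" for z
  have fi: "integrable lborel f" unfolding f_def by (rule integrable_ndc[OF s])
  have si: "set_integrable lborel {a..} f"
    unfolding set_integrable_def by (rule integrable_mult_indicator[OF _ fi]) auto
  have lim: "((\<lambda>b. set_lebesgue_integral lborel {a..b} f) \<longlongrightarrow> set_lebesgue_integral lborel {a..} f) at_top"
    by (rule tendsto_set_lebesgue_integral_at_top[OF _ si]) auto
  have ev: "eventually (\<lambda>b. set_lebesgue_integral lborel {a..b} f \<le> 0) at_top"
  proof (rule eventually_at_top_linorderI[of a])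
    fix b assume b: "b \<ge> a"
    have "set_integrable lborel {a..b} f"
      unfolding set_integrable_def by (rule integrable_mult_indicator[OF _ fi]) auto
    then have "set_lebesgue_integral lborel {a..b} f = integral {a..b} f"
      by (rule set_borel_integral_eq_integral)
    also have "\<dots> \<le> 0" unfolding f_def by (rule tail_finite[OF a xa b s])
    finally show "set_lebesgue_integral lborel {a..b} f \<le> 0" .
  qed
  have "set_lebesgue_integral lborel {a..} f \<le> 0"
    by (rule tendsto_upperbound[OF lim ev]) simp
  moreover have "set_lebesgue_integral lborel {a..} f = (LINT z|lborel. indicator {a<..} z * f z)"
    unfolding set_lebesgue_integral_def
    apply (rule integral_cong_AE)
    subgoal unfolding f_def normal_density_def by measurable
    subgoal unfolding f_def normal_density_def by measurable
    subgoal using AE_lborel_singleton[of a] by (auto split: split_indicator)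
    done
  ultimately show ?thesis by (simp add: f_def)
qed

lemma tail_left:
  fixes a x s :: real
  assumes a: "a > 0" and xa: "-a \<le> x" and s: "s > 0"
  shows "(LINT z|lborel. indicator {..<-a} z * (normal_density x s z * cos (pi / (2*a) * z))) \<le> 0"
proof -
  have "(LINT z|lborel. indicator {..<-a} z * (normal_density x s z * cos (pi / (2*a) * z)))
     = \<bar>-1\<bar> *\<^sub>R (LINT y|lborel. indicator {..<-a} (0 + -1 * y) * (normal_density x s (0 + -1 * y) * cos (pi / (2*a) * (0 + -1 * y))))"
    by (rule lborel_integral_real_affine) simp
  also have "\<dots> = (LINT y|lborel. indicator {a<..} y * (normal_density (-x) s y * cos (pi / (2*a) * y)))"
    apply simp
    apply (intro Bochner_Integration.integral_cong)
     apply (auto simp: normal_density_def power2_commute add.commute split: split_indicator)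
    done
  also have "\<dots> \<le> 0" by (rule tail_right) (use a xa s in auto)
  finally show ?thesis .
qed

lemma eigen_real:
  fixes a x s :: real
  assumes a: "a > 0" and xa: "\<bar>x\<bar> \<le> a" and s: "s > 0"
  shows "(LINT z|lborel. indicator {-a..a} z * (normal_density x s z * cos (pi / (2*a) * z)))
         \<ge> exp (- ((pi / (2*a) * s)\<^sup>2) / 2) * cos (pi / (2*a) * x)"
proof -
  define f where "f z = normal_density x s z * cos (pi / (2*a) * z)" for z
  have fi: "integrable lborel f" unfolding f_def by (rule integrable_ndc[OF s])
  have i1: "integrable lborel (\<lambda>z. indicator {..<-a} z * f z)"
    using integrable_mult_indicator[OF _ fi, of "{..<-a}"] by simp
  have i2: "integrable lborel (\<lambda>z. indicator {-a..a} z * f z)"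
    using integrable_mult_indicator[OF _ fi, of "{-a..a}"] by simp
  have i3: "integrable lborel (\<lambda>z. indicator {a<..} z * f z)"
    using integrable_mult_indicator[OF _ fi, of "{a<..}"] by simp
  have "(LINT z|lborel. f z) = (LINT z|lborel. indicator {..<-a} z * f z + indicator {-a..a} z * f z + indicator {a<..} z * f z)"
    using a by (intro Bochner_Integration.integral_cong) (auto split: split_indicator)
  also have "\<dots> = (LINT z|lborel. indicator {..<-a} z * f z) + (LINT z|lborel. indicator {-a..a} z * f z) + (LINT z|lborel. indicator {a<..} z * f z)"
    using i1 i2 i3 by simp
  finally have eq: "(LINT z|lborel. f z) = \<dots>" .
  have "(LINT z|lborel. f z) = exp (- ((pi / (2*a) * s)\<^sup>2) / 2) * cos (pi / (2*a) * x)"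
    unfolding f_def by (rule gauss_cos_shift[OF s])
  moreover have "(LINT z|lborel. indicator {..<-a} z * f z) \<le> 0"
    unfolding f_def by (rule tail_left) (use a xa s in auto)
  moreover have "(LINT z|lborel. indicator {a<..} z * f z) \<le> 0"
    unfolding f_def by (rule tail_right) (use a xa s in auto)
  ultimately show ?thesis using eq by (simp add: f_def)
qed

definition Kop :: "real \<Rightarrow> real \<Rightarrow> (real \<Rightarrow> ennreal) \<Rightarrow> real \<Rightarrow> ennreal" where
  "Kop a s f x = (\<integral>\<^sup>+ z. indicator {-a..a} z * ennreal (normal_density x s z) * f z \<partial>lborel)"

definition gfun :: "real \<Rightarrow> real \<Rightarrow> ennreal" where
  "gfun a z = ennreal (indicator {-a..a} z * cos (pi / (2*a) * z))"

definition ip :: "real \<Rightarrow> (real \<Rightarrow> ennreal) \<Rightarrow> (real \<Rightarrow> ennreal) \<Rightarrow> ennreal" where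
  "ip a u v = (\<integral>\<^sup>+ x. indicator {-a..a} x * u x * v x \<partial>lborel)"

lemma Kop_meas[measurable]:
  assumes [measurable]: "f \<in> borel_measurable borel"
  shows "Kop a s f \<in> borel_measurable borel"
  unfolding Kop_def normal_density_def by measurable

lemma gfun_meas[measurable]: "gfun a \<in> borel_measurable borel"
  unfolding gfun_def by measurable

lemma Kop_iter_meas[measurable]:
  assumes [measurable]: "f \<in> borel_measurable borel"
  shows "(Kop a s ^^ n) f \<in> borel_measurable borel"
  by (induction n) auto

lemma Kop_mono:
  assumes "\<And>z. f z \<le> g z"
  shows "Kop a s f x \<le> Kop a s g x"
  unfolding Kop_def by (intro nn_integral_mono mult_left_mono assms) auto

lemma Kop_iter_mono:
  assumes "\<And>z. f z \<le> g z"
  shows "(Kop a s ^^ n) f x \<le> (Kop a s ^^ n) g x"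
  using assms by (induction n arbitrary: x) (auto intro!: Kop_mono)

lemma Kop_cmult:
  assumes [measurable]: "f \<in> borel_measurable borel"
  shows "Kop a s (\<lambda>z. c * f z) x = c * Kop a s f x"
proof -
  have "Kop a s (\<lambda>z. c * f z) x = (\<integral>\<^sup>+ z. c * (indicator {-a..a} z * ennreal (normal_density x s z) * f z) \<partial>lborel)"
    unfolding Kop_def by (intro nn_integral_cong) (simp add: ac_simps)
  also have "\<dots> = c * Kop a s f x"
    unfolding Kop_def by (rule nn_integral_cmult) (unfold normal_density_def, measurable)
  finally show ?thesis .
qed

lemma eigen_ennreal:
  assumes a: "a > 0" and s: "s > 0"
  shows "Kop a s (gfun a) x \<ge> ennreal (exp (- ((pi / (2*a) * s)\<^sup>2) / 2)) * gfun a x"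
proof (cases "\<bar>x\<bar> \<le> a")
  case False
  then have "gfun a x = 0" by (auto simp: gfun_def indicator_def)
  then show ?thesis by simp
next
  case True
  define w where "w = pi / (2*a)"
  have cpos: "cos (w * z) \<ge> 0" if "z \<in> {-a..a}" for z
  proof -
    have "\<bar>w * z\<bar> \<le> pi / 2" using that a by (auto simp: w_def abs_mult field_simps)
    then show ?thesis by (intro cos_ge_zero) auto
  qed
  have "Kop a s (gfun a) x = (\<integral>\<^sup>+ z. ennreal (indicator {-a..a} z * (normal_density x s z * cos (w * z))) \<partial>lborel)"
    unfolding Kop_def gfun_def w_def[symmetric]
    by (intro nn_integral_cong) (auto split: split_indicator simp: ennreal_mult'[symmetric] cpos)
  also have "\<dots> = ennreal (LINT z|lborel. indicator {-a..a} z * (normal_density x s z * cos (w * z)))"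
  proof (rule nn_integral_eq_integral)
    show "integrable lborel (\<lambda>z. indicator {-a..a} z * (normal_density x s z * cos (w * z)))"
      using integrable_mult_indicator[OF _ integrable_ndc[OF s, of x w], of "{-a..a}"] by simp
    show "AE z in lborel. 0 \<le> indicator {-a..a} z * (normal_density x s z * cos (w * z))"
      using cpos by (auto split: split_indicator)
  qed
  also have "\<dots> \<ge> ennreal (exp (- ((w * s)\<^sup>2) / 2) * cos (w * x))"
    using eigen_real[OF a True s] by (intro ennreal_leI) (simp add: w_def)
  moreover have "gfun a x = ennreal (cos (w * x))" using True
    by (simp add: gfun_def w_def indicator_def abs_le_iff)
  ultimately show ?thesis using True cpos[of x]
    by (simp add: w_def ennreal_mult')
qed

lemma eigen_iter:
  assumes a: "a > 0" and s: "s > 0"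
  shows "(Kop a s ^^ n) (gfun a) x \<ge> ennreal (exp (- ((pi / (2*a) * s)\<^sup>2) / 2)) ^ n * gfun a x"
proof (induction n arbitrary: x)
  case 0 then show ?case by simp
next
  case (Suc n)
  let ?c = "ennreal (exp (- ((pi / (2*a) * s)\<^sup>2) / 2))"
  have "?c ^ Suc n * gfun a x = ?c ^ n * (?c * gfun a x)" by (simp add: ac_simps)
  also have "\<dots> \<le> ?c ^ n * Kop a s (gfun a) x"
    by (intro mult_left_mono eigen_ennreal[OF a s]) auto
  also have "\<dots> = Kop a s (\<lambda>z. ?c ^ n * gfun a z) x"
    by (rule Kop_cmult[symmetric]) measurable
  also have "\<dots> \<le> Kop a s ((Kop a s ^^ n) (gfun a)) x"
    by (intro Kop_mono Suc)
  also have "\<dots> = (Kop a s ^^ Suc n) (gfun a) x" by simp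
  finally show ?case .
qed

lemma ennreal_amgm: fixes x y :: ennreal shows "2 * x * y \<le> x * x + y * y"
proof (cases "x = \<top> \<or> y = \<top>")
  case True then show ?thesis by (auto simp: ennreal_mult_top ennreal_top_mult)
next
  case False
  then obtain p q where p: "x = ennreal p" "p \<ge> 0" and q: "y = ennreal q" "q \<ge> 0"
    by (metis ennreal_cases top.not_eq_extremum)
  have "2 * p * q \<le> p * p + q * q" using sum_squares_bound[of p q] by (simp add: power2_eq_square)
  then have "ennreal (2 * p * q) \<le> ennreal (p * p + q * q)" by (rule ennreal_leI)
  moreover have "ennreal (p * p + q * q) = x * x + y * y"
    using p q by (simp add: ennreal_mult ennreal_plus)
  moreover have "ennreal (2 * p * q) = 2 * x * y"
    using p q by (simp add: ennreal_mult)
  ultimately show ?thesis by simp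
qed
lemma nd_sym: "normal_density x s z = normal_density z s x"
  by (simp add: normal_density_def power2_commute)

lemma nn_integral_cmult_both:
  assumes "f \<in> borel_measurable M"
  shows "c * (\<integral>\<^sup>+z. f z \<partial>M) * d = (\<integral>\<^sup>+z. c * f z * d \<partial>M)"
  using assms by (simp add: nn_integral_cmult[symmetric] nn_integral_multc[symmetric])

lemma ip_Kop_sym:
  assumes [measurable]: "u \<in> borel_measurable borel" "v \<in> borel_measurable borel"
  shows "ip a u (Kop a s v) = ip a (Kop a s u) v"
proof -
  have "ip a u (Kop a s v) = (\<integral>\<^sup>+ x. \<integral>\<^sup>+ z. (indicator {-a..a} x * u x) * (indicator {-a..a} z * ennreal (normal_density x s z) * v z) \<partial>lborel \<partial>lborel)"
    unfolding ip_def Kop_def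
    apply (intro nn_integral_cong)
    apply (subst nn_integral_cmult[symmetric])
     apply (unfold normal_density_def, measurable)[1]
    apply (simp add: ac_simps)
    done
  also have "\<dots> = (\<integral>\<^sup>+ z. \<integral>\<^sup>+ x. (indicator {-a..a} x * u x) * (indicator {-a..a} z * ennreal (normal_density x s z) * v z) \<partial>lborel \<partial>lborel)"
    by (rule lborel_pair.Fubini'[symmetric]) (unfold normal_density_def, measurable)
  also have "\<dots> = ip a (Kop a s u) v"
    unfolding ip_def Kop_def
    apply (intro nn_integral_cong)
    apply (subst nn_integral_cmult_both)
     apply (unfold normal_density_def, measurable)[1]
    apply (intro nn_integral_cong)
    apply (subst nd_sym)
    apply (simp add: ac_simps)
    done
  finally show ?thesis .
qed

lemma ip_Kop_iter_sym:
  assumes [measurable]: "u \<in> borel_measurable borel" "v \<in> borel_measurable borel"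
  shows "ip a u ((Kop a s ^^ n) v) = ip a ((Kop a s ^^ n) u) v"
  using assms(1)
proof (induction n arbitrary: u)
  case 0 then show ?case by simp
next
  case (Suc n)
  note [measurable] = Suc.prems
  have "ip a u ((Kop a s ^^ Suc n) v) = ip a u (Kop a s ((Kop a s ^^ n) v))" by simp
  also have "\<dots> = ip a (Kop a s u) ((Kop a s ^^ n) v)" by (rule ip_Kop_sym) measurable
  also have "\<dots> = ip a ((Kop a s ^^ n) (Kop a s u)) v" by (rule Suc.IH) measurable
  also have "\<dots> = ip a ((Kop a s ^^ Suc n) u) v" by (simp add: funpow_Suc_right del: funpow.simps)
  finally show ?case .
qed


lemma ip_comm: "ip a u v = ip a v u"
  unfolding ip_def by (simp add: ac_simps)

lemma Kop_at0: "Kop a 1 f 0 = ip a (\<lambda>z. ennreal (std_normal_density z)) f"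
  unfolding Kop_def ip_def by (simp add: ac_simps)

lemma ip_cmult:
  assumes [measurable]: "v \<in> borel_measurable borel" "u \<in> borel_measurable borel"
  shows "ip a u (\<lambda>z. c * v z) = c * ip a u v"
  unfolding ip_def by (subst nn_integral_cmult[symmetric]) (measurable, simp add: ac_simps)

lemma ip_mono:
  assumes "\<And>z. v z \<le> v' z"
  shows "ip a u v \<le> ip a u v'"
  unfolding ip_def by (intro nn_integral_mono mult_left_mono assms) auto

lemma gfun_le1: "gfun a z \<le> 1"
  unfolding gfun_def by (auto simp: indicator_def)

lemma ip_gg: assumes a: "a > 0" shows "ip a (gfun a) (gfun a) \<le> ennreal (2 * a)"
proof -
  have "ip a (gfun a) (gfun a) \<le> (\<integral>\<^sup>+ x. indicator {-a..a} x \<partial>lborel)"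
    unfolding ip_def
    by (intro nn_integral_mono) (auto simp: indicator_def gfun_def intro!: mult_le_one)
  also have "\<dots> = ennreal (2 * a)" using a by simp
  finally show ?thesis .
qed

lemma cs_bound:
  assumes a: "a > 0" and [measurable]: "F \<in> borel_measurable borel" and b: "\<beta> > 0"
    and h: "ip a F (gfun a) \<ge> ennreal \<beta>"
  shows "ip a F F \<ge> ennreal (\<beta>\<^sup>2 / (2 * a))"
proof -
  define l where "l = \<beta> / (2 * a)"
  have l: "l > 0" using a b by (simp add: l_def)
  define G where "G z = ennreal l * gfun a z" for z
  have [measurable]: "G \<in> borel_measurable borel" unfolding G_def by measurable
  have pt: "indicator {-a..a} x * F x * (2 * G x) \<le>
         indicator {-a..a} x * F x * F x + indicator {-a..a} x * G x * G x" for x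
  proof -
    have "2 * F x * G x \<le> F x * F x + G x * G x"
      by (rule ennreal_amgm)
    then have "indicator {-a..a} x * (2 * F x * G x) \<le> indicator {-a..a} x * (F x * F x + G x * G x)"
      by (rule mult_left_mono) simp
    then show ?thesis by (simp only: distrib_left mult.assoc mult.left_commute)
  qed
  have i1: "ip a F (\<lambda>z. 2 * G z) \<le> ip a F F + ip a G G"
  proof -
    have "ip a F (\<lambda>z. 2 * G z) \<le> (\<integral>\<^sup>+ x. indicator {-a..a} x * F x * F x + indicator {-a..a} x * G x * G x \<partial>lborel)"
      unfolding ip_def by (intro nn_integral_mono pt)
    also have "\<dots> = ip a F F + ip a G G"
      unfolding ip_def by (rule nn_integral_add) measurable
    finally show ?thesis .
  qed
  have i2: "ip a F (\<lambda>z. 2 * G z) = 2 * ennreal l * ip a F (gfun a)"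
  proof -
    have "ip a F (\<lambda>z. 2 * G z) = ip a F (\<lambda>z. (2 * ennreal l) * gfun a z)"
      unfolding G_def by (simp only: mult.assoc)
    also have "\<dots> = (2 * ennreal l) * ip a F (gfun a)"
      by (rule ip_cmult) measurable
    finally show ?thesis .
  qed
  have i3: "ip a G G = ennreal l * ennreal l * ip a (gfun a) (gfun a)"
  proof -
    have "ip a G G = (\<integral>\<^sup>+ x. (ennreal l * ennreal l) * (indicator {-a..a} x * gfun a x * gfun a x) \<partial>lborel)"
      unfolding ip_def G_def by (intro nn_integral_cong) (simp only: mult.assoc mult.left_commute)
    also have "\<dots> = ennreal l * ennreal l * ip a (gfun a) (gfun a)"
      unfolding ip_def by (rule nn_integral_cmult) measurable
    finally show ?thesis .
  qed
  have i4: "ennreal l * ennreal l * ip a (gfun a) (gfun a) \<le> ennreal l * ennreal l * ennreal (2 * a)"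
    by (intro mult_left_mono ip_gg a) simp
  have i5: "2 * ennreal l * ennreal \<beta> \<le> 2 * ennreal l * ip a F (gfun a)"
    by (intro mult_left_mono h) simp
  have m2: "2 * ennreal l * ennreal \<beta> \<le> ip a F F + ennreal l * ennreal l * ennreal (2 * a)"
  proof -
    have "2 * ennreal l * ennreal \<beta> \<le> ip a F (\<lambda>z. 2 * G z)" using i5 i2 by simp
    also have "\<dots> \<le> ip a F F + ip a G G" by (rule i1)
    also have "\<dots> \<le> ip a F F + ennreal l * ennreal l * ennreal (2 * a)"
      unfolding i3 by (rule add_left_mono[OF i4])
    finally show ?thesis .
  qed
  have e1: "2 * ennreal l * ennreal \<beta> = ennreal (2 * l * \<beta>)"
    using l b by (simp add: ennreal_mult)
  have e2: "ennreal l * ennreal l * ennreal (2 * a) = ennreal (l * l * (2 * a))"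
    using l a by (simp add: ennreal_mult)
  show ?thesis
  proof (cases "ip a F F = \<top>")
    case True then show ?thesis by simp
  next
    case False
    then obtain r where r: "ip a F F = ennreal r" "r \<ge> 0" by (metis ennreal_cases top.not_eq_extremum)
    from m2 have "ennreal (2 * l * \<beta>) \<le> ennreal (r + l * l * (2 * a))"
      unfolding e1 e2 r(1) using r(2) l a by (subst ennreal_plus) auto
    then have "2 * l * \<beta> \<le> r + l * l * (2 * a)"
      using r(2) l a by (subst (asm) ennreal_le_iff) auto
    then have "r \<ge> \<beta>\<^sup>2 / (2 * a)"
      using a unfolding l_def by (simp add: field_simps power2_eq_square)
    then show ?thesis using r by (simp add: ennreal_leI)
  qed
qed

lemma nd_shift0: "normal_density 0 s (x - w) = normal_density w s x"
  by (simp add: normal_density_def)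

lemma conv_half:
  "ennreal (normal_density x 1 z) =
   (\<integral>\<^sup>+ w. ennreal (normal_density w (sqrt (1/2)) x) * ennreal (normal_density w (sqrt (1/2)) z) \<partial>lborel)"
proof -
  define s' :: real where "s' = sqrt (1/2)"
  have s': "s' > 0" by (simp add: s'_def)
  have "(\<integral>\<^sup>+y. ennreal (normal_density 0 s' ((x - z) - y) * normal_density 0 s' y) \<partial>lborel)
        = ennreal (normal_density 0 (sqrt (s'\<^sup>2 + s'\<^sup>2)) (x - z))"
    using fun_cong[OF conv_normal_density_zero_mean[OF s' s'], of "x - z"] by simp
  also have "sqrt (s'\<^sup>2 + s'\<^sup>2) = 1" by (simp add: s'_def)
  also have "normal_density 0 1 (x - z) = normal_density x 1 z"
    by (simp add: normal_density_def power2_commute)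
  finally have 1: "(\<integral>\<^sup>+y. ennreal (normal_density 0 s' ((x - z) - y) * normal_density 0 s' y) \<partial>lborel)
        = ennreal (normal_density x 1 z)" .
  have "(\<integral>\<^sup>+y. ennreal (normal_density 0 s' ((x - z) - y) * normal_density 0 s' y) \<partial>lborel)
      = ennreal \<bar>1::real\<bar> * (\<integral>\<^sup>+w. ennreal (normal_density 0 s' ((x - z) - (-z + 1 * w)) * normal_density 0 s' (-z + 1 * w)) \<partial>lborel)"
    by (rule nn_integral_real_affine) (unfold normal_density_def, measurable)
  also have "\<dots> = (\<integral>\<^sup>+ w. ennreal (normal_density w s' x) * ennreal (normal_density w s' z) \<partial>lborel)"
    apply simp
    apply (intro nn_integral_cong)
    apply (simp add: ennreal_mult[symmetric])
    apply (metis nd_shift0 nd_sym diff_diff_eq2 add.commute diff_add_cancel uminus_add_conv_diff)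
    done
  finally show ?thesis using 1 by (simp add: s'_def)
qed

lemma half_step:
  assumes [measurable]: "F \<in> borel_measurable borel"
  shows "ip a (Kop a (sqrt (1/2)) F) (Kop a (sqrt (1/2)) F) \<le> ip a F (Kop a 1 F)"
proof -
  let ?s = "sqrt (1/2) :: real"
  let ?I = "\<lambda>x. indicator {-a..a} x :: ennreal"
  let ?H = "\<lambda>x z w. (?I x * F x * (?I z * F z)) * (ennreal (normal_density w ?s x) * ennreal (normal_density w ?s z))"
  have mH[measurable]: "(\<lambda>(x, z, w). ?H x z w) \<in> borel_measurable (lborel \<Otimes>\<^sub>M lborel \<Otimes>\<^sub>M lborel)"
    unfolding normal_density_def by measurable
  have A: "ip a F (Kop a 1 F) = (\<integral>\<^sup>+ x. \<integral>\<^sup>+ z. \<integral>\<^sup>+ w. ?H x z w \<partial>lborel \<partial>lborel \<partial>lborel)"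
    unfolding ip_def Kop_def
  proof (intro nn_integral_cong)
    fix x :: real
    have "?I x * F x * (\<integral>\<^sup>+ z. ?I z * ennreal (normal_density x 1 z) * F z \<partial>lborel)
        = (\<integral>\<^sup>+ z. ?I x * F x * (?I z * ennreal (normal_density x 1 z) * F z) \<partial>lborel)"
      by (rule nn_integral_cmult[symmetric]) (unfold normal_density_def, measurable)
    also have "\<dots> = (\<integral>\<^sup>+ z. (?I x * F x * (?I z * F z)) * ennreal (normal_density x 1 z) \<partial>lborel)"
      by (intro nn_integral_cong) (simp add: ac_simps)
    also have "\<dots> = (\<integral>\<^sup>+ z. \<integral>\<^sup>+ w. ?H x z w \<partial>lborel \<partial>lborel)"
    proof (intro nn_integral_cong)
      fix z :: real
      show "(?I x * F x * (?I z * F z)) * ennreal (normal_density x 1 z) = (\<integral>\<^sup>+ w. ?H x z w \<partial>lborel)"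
        unfolding conv_half[of x z]
        by (rule nn_integral_cmult[symmetric]) (unfold normal_density_def, measurable)
    qed
    finally show "?I x * F x * (\<integral>\<^sup>+ z. ?I z * ennreal (normal_density x 1 z) * F z \<partial>lborel)
        = (\<integral>\<^sup>+ z. \<integral>\<^sup>+ w. ?H x z w \<partial>lborel \<partial>lborel)" .
  qed
  have B: "(\<integral>\<^sup>+ w. Kop a ?s F w * Kop a ?s F w \<partial>lborel) = (\<integral>\<^sup>+ w. \<integral>\<^sup>+ x. \<integral>\<^sup>+ z. ?H x z w \<partial>lborel \<partial>lborel \<partial>lborel)"
    unfolding Kop_def
  proof (intro nn_integral_cong)
    fix w :: real
    have "(\<integral>\<^sup>+ x. ?I x * ennreal (normal_density w ?s x) * F x \<partial>lborel) * (\<integral>\<^sup>+ z. ?I z * ennreal (normal_density w ?s z) * F z \<partial>lborel)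
      = (\<integral>\<^sup>+ x. (?I x * ennreal (normal_density w ?s x) * F x) * (\<integral>\<^sup>+ z. ?I z * ennreal (normal_density w ?s z) * F z \<partial>lborel) \<partial>lborel)"
      by (rule nn_integral_multc[symmetric]) (unfold normal_density_def, measurable)
    also have "\<dots> = (\<integral>\<^sup>+ x. \<integral>\<^sup>+ z. ?H x z w \<partial>lborel \<partial>lborel)"
    proof (intro nn_integral_cong)
      fix x :: real
      have "(?I x * ennreal (normal_density w ?s x) * F x) * (\<integral>\<^sup>+ z. ?I z * ennreal (normal_density w ?s z) * F z \<partial>lborel)
          = (\<integral>\<^sup>+ z. (?I x * ennreal (normal_density w ?s x) * F x) * (?I z * ennreal (normal_density w ?s z) * F z) \<partial>lborel)"
        by (rule nn_integral_cmult[symmetric]) (unfold normal_density_def, measurable)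
      also have "\<dots> = (\<integral>\<^sup>+ z. ?H x z w \<partial>lborel)"
        by (intro nn_integral_cong) (simp add: ac_simps)
      finally show "(?I x * ennreal (normal_density w ?s x) * F x) * (\<integral>\<^sup>+ z. ?I z * ennreal (normal_density w ?s z) * F z \<partial>lborel)
          = (\<integral>\<^sup>+ z. ?H x z w \<partial>lborel)" .
    qed
    finally show "(\<integral>\<^sup>+ x. ?I x * ennreal (normal_density w ?s x) * F x \<partial>lborel) * (\<integral>\<^sup>+ z. ?I z * ennreal (normal_density w ?s z) * F z \<partial>lborel)
      = (\<integral>\<^sup>+ x. \<integral>\<^sup>+ z. ?H x z w \<partial>lborel \<partial>lborel)" .
  qed
  have C: "(\<integral>\<^sup>+ w. \<integral>\<^sup>+ x. \<integral>\<^sup>+ z. ?H x z w \<partial>lborel \<partial>lborel \<partial>lborel)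
         = (\<integral>\<^sup>+ x. \<integral>\<^sup>+ w. \<integral>\<^sup>+ z. ?H x z w \<partial>lborel \<partial>lborel \<partial>lborel)"
    by (rule lborel_pair.Fubini') (unfold normal_density_def, measurable)
  also have "\<dots> = (\<integral>\<^sup>+ x. \<integral>\<^sup>+ z. \<integral>\<^sup>+ w. ?H x z w \<partial>lborel \<partial>lborel \<partial>lborel)"
    by (intro nn_integral_cong lborel_pair.Fubini') (unfold normal_density_def, measurable)
  finally have C': "(\<integral>\<^sup>+ w. \<integral>\<^sup>+ x. \<integral>\<^sup>+ z. ?H x z w \<partial>lborel \<partial>lborel \<partial>lborel)
         = (\<integral>\<^sup>+ x. \<integral>\<^sup>+ z. \<integral>\<^sup>+ w. ?H x z w \<partial>lborel \<partial>lborel \<partial>lborel)" .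
  have "ip a (Kop a ?s F) (Kop a ?s F) \<le> (\<integral>\<^sup>+ w. Kop a ?s F w * Kop a ?s F w \<partial>lborel)"
    unfolding ip_def by (intro nn_integral_mono) (auto simp: indicator_def)
  also have "\<dots> = ip a F (Kop a 1 F)" using A B C' by simp
  finally show ?thesis .
qed

definition phi0 :: "real \<Rightarrow> ennreal" where "phi0 z = ennreal (std_normal_density z)"

lemma phi0_meas[measurable]: "phi0 \<in> borel_measurable borel"
  unfolding phi0_def by measurable

lemma gfun0: "a > 0 \<Longrightarrow> gfun a 0 = 1"
  by (simp add: gfun_def)

lemma Fg_bound:
  assumes a: "a > 0"
  shows "ip a ((Kop a 1 ^^ j) phi0) (gfun a) \<ge> ennreal (exp (- ((pi / (2*a))\<^sup>2 / 2) * (j + 1)))"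
proof -
  let ?c = "ennreal (exp (- ((pi / (2*a) * 1)\<^sup>2) / 2))"
  have "?c ^ j * ?c = ?c ^ j * (?c * gfun a 0)" using gfun0[OF a] by simp
  also have "\<dots> \<le> ?c ^ j * Kop a 1 (gfun a) 0"
    by (intro mult_left_mono eigen_ennreal a) simp_all
  also have "\<dots> = ?c ^ j * ip a phi0 (gfun a)"
    by (simp add: Kop_at0 phi0_def[abs_def])
  also have "\<dots> = ip a phi0 (\<lambda>z. ?c ^ j * gfun a z)"
    by (rule ip_cmult[symmetric]) measurable
  also have "\<dots> \<le> ip a phi0 ((Kop a 1 ^^ j) (gfun a))"
    by (intro ip_mono eigen_iter a) simp
  also have "\<dots> = ip a ((Kop a 1 ^^ j) phi0) (gfun a)"
    by (rule ip_Kop_iter_sym) measurable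
  finally have 1: "?c ^ j * ?c \<le> ip a ((Kop a 1 ^^ j) phi0) (gfun a)" .
  have "?c ^ j * ?c = ennreal (exp (- ((pi / (2*a))\<^sup>2 / 2)) ^ (j + 1))"
    by (simp add: ennreal_power ennreal_mult'[symmetric] mult.commute)
  also have "exp (- ((pi / (2*a))\<^sup>2 / 2)) ^ (j + 1) = exp (- ((pi / (2*a))\<^sup>2 / 2) * (j + 1))"
  proof -
    have "exp (- ((pi / (2*a))\<^sup>2 / 2)) ^ (j + 1) = exp (real (j + 1) * (- ((pi / (2*a))\<^sup>2 / 2)))"
      by (rule exp_of_nat_mult[symmetric])
    also have "real (j + 1) * (- ((pi / (2*a))\<^sup>2 / 2)) = - ((pi / (2*a))\<^sup>2 / 2) * (j + 1)"
      by simp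
    finally show ?thesis .
  qed
  finally show ?thesis using 1 by simp
qed

lemma I_bound:
  assumes a: "a > 0" and N: "N \<ge> 3"
  shows "(Kop a 1 ^^ (N - 1)) phi0 0 \<ge> ennreal (exp (- ((pi / (2*a))\<^sup>2 / 2) * N) / (2 * a))"
proof -
  define \<theta> where "\<theta> = (pi / (2*a))\<^sup>2 / 2"
  have base: "(Kop a 1 ^^ Suc n) phi0 0 = ip a phi0 ((Kop a 1 ^^ n) phi0)" for n
    by (simp add: Kop_at0 phi0_def[abs_def])
  show ?thesis
  proof (cases "even N")
    case True
    define j where "j = N div 2 - 1"
    have j: "N = 2 * (j + 1)" using True N unfolding j_def by presburger
    then have N1: "N - 1 = Suc (j + j)" by simp
    let ?F = "(Kop a 1 ^^ j) phi0"
    have "(Kop a 1 ^^ (N - 1)) phi0 0 = ip a phi0 ((Kop a 1 ^^ j) ?F)"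
      unfolding N1 base by (simp add: funpow_add)
    also have "\<dots> = ip a ?F ?F"
      by (rule ip_Kop_iter_sym) measurable
    finally have e: "(Kop a 1 ^^ (N - 1)) phi0 0 = ip a ?F ?F" .
    have "ip a ?F ?F \<ge> ennreal ((exp (- \<theta> * (j + 1)))\<^sup>2 / (2 * a))"
      by (rule cs_bound[OF a]) (use Fg_bound[OF a, of j] in \<open>simp_all add: \<theta>_def\<close>)
    moreover have "(exp (- \<theta> * (j + 1)))\<^sup>2 = exp (- \<theta> * N)"
    proof -
      have "(exp (- \<theta> * (j + 1)))\<^sup>2 = exp (- \<theta> * (j + 1) + - \<theta> * (j + 1))"
        by (simp only: power2_eq_square exp_add)
      also have "- \<theta> * (j + 1) + - \<theta> * (j + 1) = - \<theta> * N"
        using j by (simp add: algebra_simps)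
      finally show ?thesis .
    qed
    ultimately show ?thesis using e by (simp add: \<theta>_def)
  next
    case False
    define j where "j = (N - 1) div 2 - 1"
    have j: "N = 2 * (j + 1) + 1" using False N unfolding j_def by presburger
    then have N1: "N - 1 = Suc (j + Suc j)" by simp
    let ?F = "(Kop a 1 ^^ j) phi0"
    let ?G = "Kop a (sqrt (1/2)) ?F"
    have "(Kop a 1 ^^ (N - 1)) phi0 0 = ip a phi0 ((Kop a 1 ^^ j) (Kop a 1 ?F))"
      unfolding N1 base by (simp add: funpow_add funpow_swap1)
    also have "\<dots> = ip a ?F (Kop a 1 ?F)"
      by (rule ip_Kop_iter_sym) measurable
    finally have e: "(Kop a 1 ^^ (N - 1)) phi0 0 = ip a ?F (Kop a 1 ?F)" .
    have hs: "ip a ?G ?G \<le> ip a ?F (Kop a 1 ?F)"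
      by (rule half_step) measurable
    have "ip a ?G ?G \<ge> ennreal ((exp (- \<theta> / 2) * exp (- \<theta> * (j + 1)))\<^sup>2 / (2 * a))"
    proof (rule cs_bound[OF a])
      show "?G \<in> borel_measurable borel" by measurable
      show "0 < exp (- \<theta> / 2) * exp (- \<theta> * (j + 1))" by simp
      let ?c = "ennreal (exp (- ((pi / (2*a) * sqrt (1/2))\<^sup>2) / 2))"
      have "(pi / (2*a) * sqrt (1/2))\<^sup>2 = (pi / (2*a))\<^sup>2 / 2"
        by (subst power_mult_distrib) (simp only: real_sqrt_pow2[of "1/2"] divide_inverse mult_1; simp)
      then have c: "?c = ennreal (exp (- \<theta> / 2))"
        by (simp add: \<theta>_def)
      have "ennreal (exp (- \<theta> / 2) * exp (- \<theta> * (j + 1))) = ?c * ennreal (exp (- \<theta> * (j + 1)))"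
        unfolding c by (simp add: ennreal_mult)
      also have "\<dots> \<le> ?c * ip a ?F (gfun a)"
        by (intro mult_left_mono) (use Fg_bound[OF a, of j] in \<open>simp_all add: \<theta>_def\<close>)
      also have "\<dots> = ip a ?F (\<lambda>z. ?c * gfun a z)"
        by (rule ip_cmult[symmetric]) measurable
      also have "\<dots> \<le> ip a ?F (Kop a (sqrt (1/2)) (gfun a))"
        by (intro ip_mono eigen_ennreal a) simp
      also have "\<dots> = ip a ?G (gfun a)"
        by (rule ip_Kop_sym) measurable
      finally show "ennreal (exp (- \<theta> / 2) * exp (- \<theta> * (j + 1))) \<le> ip a ?G (gfun a)" .
    qed
    moreover have "(exp (- \<theta> / 2) * exp (- \<theta> * (j + 1)))\<^sup>2 = exp (- \<theta> * N)"
    proof -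
      have "(exp (- \<theta> / 2) * exp (- \<theta> * (j + 1)))\<^sup>2 = exp ((- \<theta> / 2 + - \<theta> * (j + 1)) + (- \<theta> / 2 + - \<theta> * (j + 1)))"
        by (simp only: power2_eq_square exp_add)
      also have "(- \<theta> / 2 + - \<theta> * (j + 1)) + (- \<theta> / 2 + - \<theta> * (j + 1)) = - \<theta> * N"
        using j by (simp add: algebra_simps)
      finally show ?thesis .
    qed
    ultimately show ?thesis using e hs by (simp add: \<theta>_def)
  qed
qed

abbreviation nu :: "real measure" where "nu \<equiv> density lborel std_normal_density"

lemma nu_prob: "prob_space nu" by (rule prob_space_normal_density) simp

interpretation NP: product_sigma_finite "\<lambda>_::nat. nu"
  unfolding product_sigma_finite_def using nu_prob by (simp add: prob_space_imp_sigma_finite)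

definition PcOp :: "real \<Rightarrow> real \<Rightarrow> (real \<Rightarrow> ennreal) \<Rightarrow> real \<Rightarrow> ennreal" where
  "PcOp a c f x = (\<integral>\<^sup>+ t. indicator {-a..a} (x + t - c) * f (x + t - c) \<partial>nu)"

lemma PcOp_meas[measurable]:
  assumes [measurable]: "f \<in> borel_measurable borel"
  shows "PcOp a c f \<in> borel_measurable borel"
  unfolding PcOp_def by measurable

lemma comp_meas:
  assumes "i \<in> I"
  shows "(\<lambda>y. y i) \<in> borel_measurable (Pi\<^sub>M I (\<lambda>_. nu))"
proof -
  have "(\<lambda>y. y i) \<in> measurable (Pi\<^sub>M I (\<lambda>_. nu)) nu"
    using measurable_component_singleton[OF assms, of "\<lambda>_. nu"] by simp
  moreover have "measurable (Pi\<^sub>M I (\<lambda>_. nu)) nu = measurable (Pi\<^sub>M I (\<lambda>_. nu)) borel"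
    by (intro measurable_cong_sets) auto
  ultimately show ?thesis by simp
qed

lemma psum_meas:
  fixes k n :: nat
  assumes "k \<le> n"
  shows "(\<lambda>y. \<Sum>i<k. y i) \<in> borel_measurable (Pi\<^sub>M {..<n} (\<lambda>_. nu))"
  using assms
proof (induction k)
  case 0 then show ?case by simp
next
  case (Suc k)
  have c: "(\<lambda>y. y k) \<in> borel_measurable (Pi\<^sub>M {..<n} (\<lambda>_. nu))"
    by (rule comp_meas) (use Suc.prems in auto)
  have "(\<lambda>y. \<Sum>i<Suc k. y i) = (\<lambda>y. (\<Sum>i<k. y i) + y k)" by simp
  then show ?case using Suc c by (simp add: borel_measurable_add)
qed

lemma psum_g_meas:
  fixes k n :: nat
  assumes "k \<le> n" and g: "g \<in> borel_measurable borel"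
  shows "(\<lambda>y. g ((\<Sum>i<k. y i) - r)) \<in> borel_measurable (Pi\<^sub>M {..<n} (\<lambda>_. nu))"
proof -
  have "(\<lambda>y. (\<Sum>i<k. y i) - r) \<in> borel_measurable (Pi\<^sub>M {..<n} (\<lambda>_. nu))"
    using psum_meas[OF assms(1)] by (simp add: borel_measurable_diff)
  from measurable_compose[OF this g] show ?thesis by (simp add: comp_def)
qed

lemma walk:
  assumes [measurable]: "f \<in> borel_measurable borel"
  shows "(\<integral>\<^sup>+ y. (\<Prod>k\<in>{1..n}. indicator {-a..a} ((\<Sum>i<k. y i) - real k * c)) * f ((\<Sum>i<n. y i) - real n * c)
            \<partial>Pi\<^sub>M {..<n} (\<lambda>_. nu)) = (PcOp a c ^^ n) f 0"
  using assms
proof (induction n arbitrary: f)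
  case 0
  then show ?case by (simp add: PiM_empty)
next
  case (Suc n)
  note [measurable] = Suc.prems
  have mPc[measurable]: "PcOp a c f \<in> borel_measurable borel" by measurable
  let ?Q = "\<lambda>y. (\<Prod>k\<in>{1..Suc n}. indicator {-a..a} ((\<Sum>i<k. y i) - real k * c) :: ennreal) * f ((\<Sum>i<Suc n. y i) - real (Suc n) * c)"
  have mQ: "?Q \<in> borel_measurable (Pi\<^sub>M (insert n {..<n}) (\<lambda>_. nu))"
  proof -
    have "?Q \<in> borel_measurable (Pi\<^sub>M {..<Suc n} (\<lambda>_. nu))"
      by (intro borel_measurable_times_ennreal borel_measurable_prod_ennreal psum_g_meas Suc.prems) auto
    then show ?thesis by (simp add: lessThan_Suc)
  qed
  have "(\<integral>\<^sup>+ y. ?Q y \<partial>Pi\<^sub>M {..<Suc n} (\<lambda>_. nu)) = (\<integral>\<^sup>+ y. ?Q y \<partial>Pi\<^sub>M (insert n {..<n}) (\<lambda>_. nu))"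
    by (simp add: lessThan_Suc)
  also have "\<dots> = (\<integral>\<^sup>+ x. \<integral>\<^sup>+ t. ?Q (x(n := t)) \<partial>nu \<partial>Pi\<^sub>M {..<n} (\<lambda>_. nu))"
    by (rule NP.product_nn_integral_insert) (use mQ in auto)
  also have "\<dots> = (\<integral>\<^sup>+ x. (\<Prod>k\<in>{1..n}. indicator {-a..a} ((\<Sum>i<k. x i) - real k * c)) * PcOp a c f ((\<Sum>i<n. x i) - real n * c) \<partial>Pi\<^sub>M {..<n} (\<lambda>_. nu))"
  proof (intro nn_integral_cong)
    fix x :: "nat \<Rightarrow> real"
    have s1: "(\<Sum>i<k. (x(n := t)) i) = (\<Sum>i<k. x i)" if "k \<le> n" for k t
      using that by (intro sum.cong) auto
    have s2: "(\<Sum>i<Suc n. (x(n := t)) i) - real (Suc n) * c = (\<Sum>i<n. x i) - real n * c + t - c" for t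
      using s1[of n t] by (simp add: algebra_simps)
    have pr: "(\<Prod>k\<in>{1..Suc n}. g k :: ennreal) = (\<Prod>k\<in>{1..n}. g k) * g (Suc n)" for g
      by (simp add: prod.nat_ivl_Suc')
    have "?Q (x(n := t)) = (\<Prod>k\<in>{1..n}. indicator {-a..a} ((\<Sum>i<k. x i) - real k * c)) *
        (indicator {-a..a} ((\<Sum>i<n. x i) - real n * c + t - c) * f ((\<Sum>i<n. x i) - real n * c + t - c))" for t
    proof -
      have pe: "(\<Prod>k\<in>{1..n}. indicator {-a..a} ((\<Sum>i<k. (x(n := t)) i) - real k * c) :: ennreal)
           = (\<Prod>k\<in>{1..n}. indicator {-a..a} ((\<Sum>i<k. x i) - real k * c))"
        by (rule prod.cong[OF refl]) (metis s1 atLeastAtMost_iff)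
      show ?thesis unfolding pr s2 pe by (simp add: mult.assoc)
    qed
    then show "(\<integral>\<^sup>+ t. ?Q (x(n := t)) \<partial>nu) = (\<Prod>k\<in>{1..n}. indicator {-a..a} ((\<Sum>i<k. x i) - real k * c)) * PcOp a c f ((\<Sum>i<n. x i) - real n * c)"
      unfolding PcOp_def
      by (simp only:) (rule nn_integral_cmult, measurable)
  qed
  also have "\<dots> = (PcOp a c ^^ n) (PcOp a c f) 0"
    by (rule Suc.IH) measurable
  also have "\<dots> = (PcOp a c ^^ Suc n) f 0"
    by (simp add: funpow_Suc_right del: funpow.simps)
  finally show ?case .
qed

lemma phi_shift:
  "std_normal_density (c - x + z) = normal_density x 1 z * exp (- c * z) * exp (c * x - c\<^sup>2 / 2)"
proof -
  have "std_normal_density (c - x + z) = 1 / sqrt (2 * pi) * exp (- (c - x + z)\<^sup>2 / 2)"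
    by (simp add: std_normal_density_def)
  also have "- (c - x + z)\<^sup>2 / 2 = - (z - x)\<^sup>2 / 2 + - c * z + (c * x - c\<^sup>2 / 2)"
    by (simp add: power2_eq_square field_simps)
  also have "1 / sqrt (2 * pi) * exp (- (z - x)\<^sup>2 / 2 + - c * z + (c * x - c\<^sup>2 / 2))
       = 1 / sqrt (2 * pi) * exp (- (z - x)\<^sup>2 / 2) * exp (- c * z) * exp (c * x - c\<^sup>2 / 2)"
    by (simp only: exp_add mult.assoc)
  also have "\<dots> = normal_density x 1 z * exp (- c * z) * exp (c * x - c\<^sup>2 / 2)"
    by (simp add: normal_density_def)
  finally show ?thesis .
qed

lemma PcOp_tilt:
  assumes [measurable]: "f \<in> borel_measurable borel"
  shows "PcOp a c f x = ennreal (exp (c * x - c\<^sup>2 / 2)) * Kop a 1 (\<lambda>z. ennreal (exp (- c * z)) * f z) x"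
proof -
  have "PcOp a c f x = (\<integral>\<^sup>+ t. ennreal (std_normal_density t) * (indicator {-a..a} (x + t - c) * f (x + t - c)) \<partial>lborel)"
    unfolding PcOp_def by (rule nn_integral_density) (unfold normal_density_def, measurable)
  also have "\<dots> = ennreal \<bar>1::real\<bar> * (\<integral>\<^sup>+ z. ennreal (std_normal_density ((c - x) + 1 * z)) * (indicator {-a..a} (x + ((c - x) + 1 * z) - c) * f (x + ((c - x) + 1 * z) - c)) \<partial>lborel)"
    by (rule nn_integral_real_affine) (unfold normal_density_def, measurable)
  also have "\<dots> = (\<integral>\<^sup>+ z. ennreal (exp (c * x - c\<^sup>2 / 2)) * (indicator {-a..a} z * ennreal (normal_density x 1 z) * (ennreal (exp (- c * z)) * f z)) \<partial>lborel)"
    apply (simp only: abs_one ennreal_1 mult_1_left phi_shift)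
    apply (intro nn_integral_cong)
    apply (simp add: ennreal_mult' ac_simps)
    done
  also have "\<dots> = ennreal (exp (c * x - c\<^sup>2 / 2)) * Kop a 1 (\<lambda>z. ennreal (exp (- c * z)) * f z) x"
    unfolding Kop_def by (rule nn_integral_cmult) (unfold normal_density_def, measurable)
  finally show ?thesis .
qed

lemma PcOp_iter_meas[measurable]:
  assumes [measurable]: "f \<in> borel_measurable borel"
  shows "(PcOp a c ^^ n) f \<in> borel_measurable borel"
  by (induction n) auto

lemma PcOp_iter:
  assumes [measurable]: "f \<in> borel_measurable borel"
  shows "(PcOp a c ^^ n) f x = ennreal (exp (c * x - real n * c\<^sup>2 / 2)) * (Kop a 1 ^^ n) (\<lambda>z. ennreal (exp (- c * z)) * f z) x"
proof (induction n arbitrary: x)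
  case 0
  have "ennreal (exp (c * x)) * (ennreal (exp (- c * x)) * f x) = ennreal (exp (c * x) * exp (- c * x)) * f x"
    by (simp add: ennreal_mult' mult.assoc)
  also have "exp (c * x) * exp (- c * x) = 1" by (simp add: exp_add[symmetric])
  finally show ?case by simp
next
  case (Suc n)
  let ?h = "\<lambda>z. ennreal (exp (- c * z)) * f z"
  have [measurable]: "?h \<in> borel_measurable borel" by measurable
  have pt: "ennreal (exp (- c * z)) * (PcOp a c ^^ n) f z = ennreal (exp (- real n * c\<^sup>2 / 2)) * (Kop a 1 ^^ n) ?h z" for z
  proof -
    have "ennreal (exp (- c * z)) * (PcOp a c ^^ n) f z
       = ennreal (exp (- c * z)) * ennreal (exp (c * z - real n * c\<^sup>2 / 2)) * (Kop a 1 ^^ n) ?h z"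
      by (simp add: Suc.IH mult.assoc)
    also have "ennreal (exp (- c * z)) * ennreal (exp (c * z - real n * c\<^sup>2 / 2)) = ennreal (exp (- real n * c\<^sup>2 / 2))"
      by (simp add: ennreal_mult'[symmetric] exp_add[symmetric])
    finally show ?thesis .
  qed
  have "(PcOp a c ^^ Suc n) f x = PcOp a c ((PcOp a c ^^ n) f) x" by simp
  also have "\<dots> = ennreal (exp (c * x - c\<^sup>2 / 2)) * Kop a 1 (\<lambda>z. ennreal (exp (- c * z)) * (PcOp a c ^^ n) f z) x"
    by (rule PcOp_tilt) measurable
  also have "\<dots> = ennreal (exp (c * x - c\<^sup>2 / 2)) * Kop a 1 (\<lambda>z. ennreal (exp (- real n * c\<^sup>2 / 2)) * (Kop a 1 ^^ n) ?h z) x"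
    by (simp only: pt)
  also have "\<dots> = ennreal (exp (c * x - c\<^sup>2 / 2)) * (ennreal (exp (- real n * c\<^sup>2 / 2)) * (Kop a 1 ^^ Suc n) ?h x)"
  proof -
    have m: "(Kop a 1 ^^ n) ?h \<in> borel_measurable borel" by measurable
    have "Kop a 1 (\<lambda>z. ennreal (exp (- real n * c\<^sup>2 / 2)) * (Kop a 1 ^^ n) ?h z) x
        = ennreal (exp (- real n * c\<^sup>2 / 2)) * Kop a 1 ((Kop a 1 ^^ n) ?h) x"
      by (rule Kop_cmult[OF m])
    then show ?thesis by simp
  qed
  also have "\<dots> = ennreal (exp (c * x - c\<^sup>2 / 2) * exp (- real n * c\<^sup>2 / 2)) * (Kop a 1 ^^ Suc n) ?h x"
    by (simp add: ennreal_mult' mult.assoc)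
  also have "exp (c * x - c\<^sup>2 / 2) * exp (- real n * c\<^sup>2 / 2) = exp (c * x - real (Suc n) * c\<^sup>2 / 2)"
    by (simp add: exp_add[symmetric] algebra_simps)
  finally show ?case .
qed

lemma Kop_iter_cmult:
  assumes [measurable]: "h \<in> borel_measurable borel"
  shows "(Kop a s ^^ n) (\<lambda>z. C * h z) x = C * (Kop a s ^^ n) h x"
proof (induction n arbitrary: x)
  case 0 then show ?case by simp
next
  case (Suc n)
  have e: "(Kop a s ^^ n) (\<lambda>z. C * h z) = (\<lambda>z. C * (Kop a s ^^ n) h z)"
    by (rule ext) (rule Suc.IH)
  have m: "(Kop a s ^^ n) h \<in> borel_measurable borel" by measurable
  have "(Kop a s ^^ Suc n) (\<lambda>z. C * h z) x = Kop a s (\<lambda>z. C * (Kop a s ^^ n) h z) x"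
    by (simp add: e)
  also have "\<dots> = C * (Kop a s ^^ Suc n) h x" by (simp add: Kop_cmult[OF m])
  finally show ?case .
qed

lemma prod_indicator_if:
  assumes "finite S"
  shows "(\<Prod>k\<in>S. (indicator (B k) (g k) :: ennreal)) = (if \<forall>k\<in>S. g k \<in> B k then 1 else 0)"
  using assms by (induction S rule: finite_induct) (auto simp: indicator_def)

lemma gauss_nn:
  assumes s: "s > 0"
  shows "(\<integral>\<^sup>+ t. ennreal (exp (- t\<^sup>2 / (2 * s))) \<partial>lborel) = ennreal (sqrt (2 * pi * s))"
proof -
  have sq: "(sqrt s)\<^sup>2 = s" using s by simp
  have ps: "0 \<le> pi * s" using s pi_gt_zero by (metis less_imp_le mult_pos_pos)
  have nd: "exp (- t\<^sup>2 / (2 * s)) = sqrt (2 * pi * s) * normal_density 0 (sqrt s) t" for t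
    using s by (simp add: normal_density_def sq)
  have "(\<integral>\<^sup>+ t. ennreal (exp (- t\<^sup>2 / (2 * s))) \<partial>lborel)
      = (\<integral>\<^sup>+ t. ennreal (sqrt (2 * pi * s)) * ennreal (normal_density 0 (sqrt s) t) \<partial>lborel)"
    by (intro nn_integral_cong, subst nd, rule ennreal_mult) (auto simp: ps)
  also have "\<dots> = ennreal (sqrt (2 * pi * s)) * (\<integral>\<^sup>+ t. ennreal (normal_density 0 (sqrt s) t) \<partial>lborel)"
    by (rule nn_integral_cmult) measurable
  also have "(\<integral>\<^sup>+ t. ennreal (normal_density 0 (sqrt s) t) \<partial>lborel) = ennreal (LINT t|lborel. normal_density 0 (sqrt s) t)"
    using s by (intro nn_integral_eq_integral) auto
  also have "(LINT t|lborel. normal_density 0 (sqrt s) t) = 1"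
    using s by simp
  finally show ?thesis by simp
qed

lemma pair_psum_meas:
  fixes k n :: nat
  assumes "k \<le> n"
  shows "(\<lambda>p. \<Sum>i<k. fst p i) \<in> borel_measurable (Pi\<^sub>M {..<n} (\<lambda>_. nu) \<Otimes>\<^sub>M lborel)"
  using measurable_compose[OF measurable_fst[of "Pi\<^sub>M {..<n} (\<lambda>_. nu)" lborel] psum_meas[OF assms]] by (simp add: comp_def)

lemma main_identity:
  fixes a :: real and n :: nat
  defines "M \<equiv> Pi\<^sub>M {..<Suc n} (\<lambda>_. nu)"
  defines "A \<equiv> {y \<in> space M. \<forall>k\<in>{1..n}. \<bar>(\<Sum>i<k. y i) - real k / real (Suc n) * (\<Sum>i<Suc n. y i)\<bar> \<le> a}"
  shows "A \<in> sets M"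
    and "emeasure M A = ennreal (sqrt (2 * pi * real (Suc n))) * (Kop a 1 ^^ n) phi0 0"
proof -
  define Nr where "Nr = real (Suc n)"
  have Nr: "Nr > 0" by (simp add: Nr_def)
  define Q where "Q y = (\<Prod>k\<in>{1..n}. indicator {-a..a} ((\<Sum>i<k. y i) - real k / Nr * (\<Sum>i<Suc n. y i)) :: ennreal)" for y :: "nat \<Rightarrow> real"
  have Qm: "Q \<in> borel_measurable M"
    unfolding Q_def M_def
  proof (intro borel_measurable_prod_ennreal)
    fix k assume k: "k \<in> {1..n}"
    have "(\<lambda>y. (\<Sum>i<k. y i) - real k / Nr * (\<Sum>i<Suc n. y i)) \<in> borel_measurable (Pi\<^sub>M {..<Suc n} (\<lambda>_. nu))"
      using psum_meas[of k "Suc n"] psum_meas[of "Suc n" "Suc n"] k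
      by (intro borel_measurable_diff borel_measurable_times) auto
    from measurable_compose[OF this borel_measurable_indicator[of "{-a..a}"]]
    show "(\<lambda>y. indicator {-a..a} ((\<Sum>i<k. y i) - real k / Nr * (\<Sum>i<Suc n. y i)) :: ennreal) \<in> borel_measurable (Pi\<^sub>M {..<Suc n} (\<lambda>_. nu))"
      by (simp add: comp_def)
  qed
  have Qif: "Q y = (if y \<in> A then 1 else 0)" if "y \<in> space M" for y
  proof -
    have "Q y = (if \<forall>k\<in>{1..n}. (\<Sum>i<k. y i) - real k / Nr * (\<Sum>i<Suc n. y i) \<in> {-a..a} then 1 else 0)"
      unfolding Q_def by (rule prod_indicator_if) simp
    moreover have "(\<forall>k\<in>{1..n}. (\<Sum>i<k. y i) - real k / Nr * (\<Sum>i<Suc n. y i) \<in> {-a..a}) \<longleftrightarrow> y \<in> A"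
      using that unfolding A_def Nr_def atLeastAtMost_iff abs_le_iff by auto
    ultimately show ?thesis by simp
  qed
  have Asub: "A \<subseteq> space M" unfolding A_def by auto
  have AQ: "A = Q -` {1} \<inter> space M"
    using Qif Asub by (auto split: if_splits)
  show As: "A \<in> sets M" unfolding AQ by (rule measurable_sets[OF Qm]) simp
  have "emeasure M A = (\<integral>\<^sup>+ y. indicator A y \<partial>M)" using As by simp
  also have "\<dots> = (\<integral>\<^sup>+ y. Q y \<partial>M)"
    by (intro nn_integral_cong) (simp add: Qif indicator_def)
  also have "\<dots> = (\<integral>\<^sup>+ y. Q y \<partial>Pi\<^sub>M (insert n {..<n}) (\<lambda>_. nu))"
    by (simp add: M_def lessThan_Suc)
  also have "\<dots> = (\<integral>\<^sup>+ x. \<integral>\<^sup>+ t. Q (x(n := t)) \<partial>nu \<partial>Pi\<^sub>M {..<n} (\<lambda>_. nu))"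
    by (rule NP.product_nn_integral_insert) (use Qm in \<open>auto simp: M_def lessThan_Suc\<close>)
  finally have step1: "emeasure M A = (\<integral>\<^sup>+ x. \<integral>\<^sup>+ t. Q (x(n := t)) \<partial>nu \<partial>Pi\<^sub>M {..<n} (\<lambda>_. nu))" .
  define R where "R x s = (\<Prod>k\<in>{1..n}. indicator {-a..a} ((\<Sum>i<k. x i) - real k / Nr * s) :: ennreal)" for x :: "nat \<Rightarrow> real" and s
  define H where "H x s = ennreal (std_normal_density (s - (\<Sum>i<n. x i))) * R x s" for x :: "nat \<Rightarrow> real" and s
  have inner: "(\<integral>\<^sup>+ t. Q (x(n := t)) \<partial>nu) = (\<integral>\<^sup>+ s. H x s \<partial>lborel)" for x :: "nat \<Rightarrow> real"
  proof -
    have s1: "(\<Sum>i<k. (x(n := t)) i) = (\<Sum>i<k. x i)" if "k \<le> n" for k t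
      using that by (intro sum.cong) auto
    have QR: "Q (x(n := t)) = R x ((\<Sum>i<n. x i) + t)" for t
    proof -
      have "(\<Sum>i<Suc n. (x(n := t)) i) = (\<Sum>i<n. x i) + t" using s1[of n t] by simp
      then show ?thesis unfolding Q_def R_def
        by (intro prod.cong refl) (metis s1 atLeastAtMost_iff)
    qed
    have Rm[measurable]: "R x \<in> borel_measurable borel" unfolding R_def by measurable
    have "(\<integral>\<^sup>+ t. Q (x(n := t)) \<partial>nu) = (\<integral>\<^sup>+ t. ennreal (std_normal_density t) * R x ((\<Sum>i<n. x i) + t) \<partial>lborel)"
      unfolding QR by (rule nn_integral_density) (unfold normal_density_def, measurable)
    also have "\<dots> = ennreal \<bar>1::real\<bar> * (\<integral>\<^sup>+ s. ennreal (std_normal_density (- (\<Sum>i<n. x i) + 1 * s)) * R x ((\<Sum>i<n. x i) + (- (\<Sum>i<n. x i) + 1 * s)) \<partial>lborel)"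
      by (rule nn_integral_real_affine) (unfold normal_density_def, measurable)
    also have "\<dots> = (\<integral>\<^sup>+ s. H x s \<partial>lborel)"
      unfolding H_def by simp
    finally show ?thesis .
  qed
  have Hm: "(\<lambda>(x, s). H x s) \<in> borel_measurable (Pi\<^sub>M {..<n} (\<lambda>_. nu) \<Otimes>\<^sub>M lborel)"
  proof -
    have sn: "(\<lambda>p. snd p :: real) \<in> borel_measurable (Pi\<^sub>M {..<n} (\<lambda>_. nu) \<Otimes>\<^sub>M lborel)"
      using measurable_snd[of "Pi\<^sub>M {..<n} (\<lambda>_. nu)" lborel] by simp
    have f1: "(\<lambda>p. ennreal (std_normal_density (snd p - (\<Sum>i<n. fst p i)))) \<in> borel_measurable (Pi\<^sub>M {..<n} (\<lambda>_. nu) \<Otimes>\<^sub>M lborel)"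
    proof -
      have "(\<lambda>p. snd p - (\<Sum>i<n. fst p i)) \<in> borel_measurable (Pi\<^sub>M {..<n} (\<lambda>_. nu) \<Otimes>\<^sub>M lborel)"
        using sn pair_psum_meas[of n n] by (intro borel_measurable_diff) auto
      from measurable_compose[OF this, of "\<lambda>u. ennreal (std_normal_density u)"]
      show ?thesis by (simp add: comp_def normal_density_def)
    qed
    have f2: "(\<lambda>p. R (fst p) (snd p)) \<in> borel_measurable (Pi\<^sub>M {..<n} (\<lambda>_. nu) \<Otimes>\<^sub>M lborel)"
      unfolding R_def
    proof (intro borel_measurable_prod_ennreal)
      fix k assume k: "k \<in> {1..n}"
      have "(\<lambda>p. (\<Sum>i<k. fst p i) - real k / Nr * snd p) \<in> borel_measurable (Pi\<^sub>M {..<n} (\<lambda>_. nu) \<Otimes>\<^sub>M lborel)"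
        using sn pair_psum_meas[of k n] k by (intro borel_measurable_diff borel_measurable_times) auto
      from measurable_compose[OF this borel_measurable_indicator[of "{-a..a}"]]
      show "(\<lambda>p. indicator {-a..a} ((\<Sum>i<k. fst p i) - real k / Nr * snd p) :: ennreal) \<in> borel_measurable (Pi\<^sub>M {..<n} (\<lambda>_. nu) \<Otimes>\<^sub>M lborel)"
        by (simp add: comp_def)
    qed
    have "(\<lambda>p. ennreal (std_normal_density (snd p - (\<Sum>i<n. fst p i))) * R (fst p) (snd p)) \<in> borel_measurable (Pi\<^sub>M {..<n} (\<lambda>_. nu) \<Otimes>\<^sub>M lborel)"
      using f1 f2 by (rule borel_measurable_times_ennreal)
    then show ?thesis by (simp add: H_def case_prod_beta')
  qed
  interpret PS: pair_sigma_finite "Pi\<^sub>M {..<n} (\<lambda>_. nu)" lborel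
  proof -
    have "prob_space (Pi\<^sub>M {..<n} (\<lambda>_. nu))" by (rule prob_space_PiM) (rule nu_prob)
    then have "sigma_finite_measure (Pi\<^sub>M {..<n} (\<lambda>_. nu))" by (rule prob_space_imp_sigma_finite)
    then show "pair_sigma_finite (Pi\<^sub>M {..<n} (\<lambda>_. nu)) lborel"
      by (simp add: pair_sigma_finite_def lborel.sigma_finite_measure_axioms)
  qed
  have step2: "emeasure M A = (\<integral>\<^sup>+ s. \<integral>\<^sup>+ x. H x s \<partial>Pi\<^sub>M {..<n} (\<lambda>_. nu) \<partial>lborel)"
    unfolding step1 inner by (rule PS.Fubini'[OF Hm, symmetric])
  have fixed: "(\<integral>\<^sup>+ x. H x s \<partial>Pi\<^sub>M {..<n} (\<lambda>_. nu)) = ennreal (exp (- s\<^sup>2 / (2 * Nr))) * (Kop a 1 ^^ n) phi0 0" for s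
  proof -
    define c where "c = s / Nr"
    have sc: "s = Nr * c" using Nr by (simp add: c_def)
    define f where "f v = ennreal (std_normal_density (c - v))" for v
    have fm[measurable]: "f \<in> borel_measurable borel" unfolding f_def normal_density_def by measurable
    have Hw: "H x s = (\<Prod>k\<in>{1..n}. indicator {-a..a} ((\<Sum>i<k. x i) - real k * c)) * f ((\<Sum>i<n. x i) - real n * c)" for x
    proof -
      have e1: "s - (\<Sum>i<n. x i) = c - ((\<Sum>i<n. x i) - real n * c)"
        unfolding sc Nr_def by (simp add: algebra_simps)
      have e2: "real k / Nr * s = real k * c" for k
        unfolding sc using Nr by simp
      show ?thesis unfolding H_def R_def f_def e1 e2 by (rule mult.commute)
    qed
    have "(\<integral>\<^sup>+ x. H x s \<partial>Pi\<^sub>M {..<n} (\<lambda>_. nu)) = (PcOp a c ^^ n) f 0"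
      unfolding Hw by (rule walk) measurable
    also have "\<dots> = ennreal (exp (c * 0 - real n * c\<^sup>2 / 2)) * (Kop a 1 ^^ n) (\<lambda>z. ennreal (exp (- c * z)) * f z) 0"
      by (rule PcOp_iter) measurable
    also have "(\<lambda>z. ennreal (exp (- c * z)) * f z) = (\<lambda>z. ennreal (exp (- c\<^sup>2 / 2)) * phi0 z)"
    proof (rule ext)
      fix z
      have "exp (- c * z) * std_normal_density (c - z) = exp (- c\<^sup>2 / 2) * std_normal_density z"
      proof -
        have "exp (- c * z) * std_normal_density (c - z) = 1 / sqrt (2 * pi) * (exp (- c * z) * exp (- (c - z)\<^sup>2 / 2))"
          by (simp add: std_normal_density_def)
        also have "exp (- c * z) * exp (- (c - z)\<^sup>2 / 2) = exp (- c * z + - (c - z)\<^sup>2 / 2)"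
          by (rule exp_add[symmetric])
        also have "- c * z + - (c - z)\<^sup>2 / 2 = - c\<^sup>2 / 2 + - z\<^sup>2 / 2"
          by (simp add: power2_eq_square field_simps)
        also have "exp (- c\<^sup>2 / 2 + - z\<^sup>2 / 2) = exp (- c\<^sup>2 / 2) * exp (- z\<^sup>2 / 2)"
          by (rule exp_add)
        also have "1 / sqrt (2 * pi) * (exp (- c\<^sup>2 / 2) * exp (- z\<^sup>2 / 2)) = exp (- c\<^sup>2 / 2) * std_normal_density z"
          by (simp add: std_normal_density_def)
        finally show ?thesis .
      qed
      then show "ennreal (exp (- c * z)) * f z = ennreal (exp (- c\<^sup>2 / 2)) * phi0 z"
        unfolding f_def phi0_def by (simp add: ennreal_mult[symmetric])
    qed
    also have "(Kop a 1 ^^ n) (\<lambda>z. ennreal (exp (- c\<^sup>2 / 2)) * phi0 z) 0 = ennreal (exp (- c\<^sup>2 / 2)) * (Kop a 1 ^^ n) phi0 0"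
      by (rule Kop_iter_cmult) measurable
    also have "ennreal (exp (c * 0 - real n * c\<^sup>2 / 2)) * (ennreal (exp (- c\<^sup>2 / 2)) * (Kop a 1 ^^ n) phi0 0)
        = ennreal (exp (c * 0 - real n * c\<^sup>2 / 2) * exp (- c\<^sup>2 / 2)) * (Kop a 1 ^^ n) phi0 0"
      by (simp add: ennreal_mult mult.assoc)
    also have "exp (c * 0 - real n * c\<^sup>2 / 2) * exp (- c\<^sup>2 / 2) = exp (- s\<^sup>2 / (2 * Nr))"
    proof -
      have "c * 0 - real n * c\<^sup>2 / 2 + - c\<^sup>2 / 2 = - s\<^sup>2 / (2 * Nr)"
        unfolding sc using Nr by (simp add: Nr_def power2_eq_square field_simps)
      then show ?thesis by (simp add: exp_add[symmetric])
    qed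
    finally show ?thesis .
  qed
  have "emeasure M A = (\<integral>\<^sup>+ s. ennreal (exp (- s\<^sup>2 / (2 * Nr))) * (Kop a 1 ^^ n) phi0 0 \<partial>lborel)"
    unfolding step2 fixed ..
  also have "\<dots> = (\<integral>\<^sup>+ s. ennreal (exp (- s\<^sup>2 / (2 * Nr))) \<partial>lborel) * (Kop a 1 ^^ n) phi0 0"
    by (rule nn_integral_multc) measurable
  also have "\<dots> = ennreal (sqrt (2 * pi * Nr)) * (Kop a 1 ^^ n) phi0 0"
    using gauss_nn[OF Nr] by simp
  finally show "emeasure M A = ennreal (sqrt (2 * pi * real (Suc n))) * (Kop a 1 ^^ n) phi0 0"
    by (simp add: Nr_def)
qed

lemma sum_ivl_split:
  fixes f :: "nat \<Rightarrow> real"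
  assumes "m \<le> p"
  shows "(\<Sum>i\<in>{m..<p}. f i) = (\<Sum>i<p. f i) - (\<Sum>i<m. f i)"
  using sum.atLeastLessThan_concat[of 0 m p f] assms by (simp add: atLeast0LessThan)

lemma window_identity:
  fixes y :: "nat \<Rightarrow> real" and N K j :: nat
  assumes NK: "K + 2 \<le> N" and j: "j < N"
  defines "T \<equiv> (\<Sum>i<N. y i)"
  defines "B \<equiv> (\<lambda>k. (\<Sum>i<k. y i) - real k / real N * T)"
  shows "\<exists>p q. p \<le> N \<and> q \<le> N \<and> (\<Sum>i=j..j+K. y (i mod N)) - real (K + 1) / real N * T = B p - B q"
proof -
  have Npos: "real N > 0" using NK by simp
  have ivl: "{j..j+K} = {j..<j + (K + 1)}" by auto
  show ?thesis
  proof (cases "j + (K + 1) \<le> N")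
    case True
    have "(\<Sum>i=j..j+K. y (i mod N)) = (\<Sum>i\<in>{j..<j + (K + 1)}. y i)"
      unfolding ivl using True by (intro sum.cong) auto
    also have "\<dots> = (\<Sum>i<j + (K + 1). y i) - (\<Sum>i<j. y i)" by (rule sum_ivl_split) simp
    finally have W: "(\<Sum>i=j..j+K. y (i mod N)) = (\<Sum>i<j + (K + 1). y i) - (\<Sum>i<j. y i)" .
    show ?thesis
    proof (intro exI conjI)
      show "j + (K + 1) \<le> N" by (rule True)
      show "j \<le> N" using j by simp
      show "(\<Sum>i=j..j+K. y (i mod N)) - real (K + 1) / real N * T = B (j + (K + 1)) - B j"
        unfolding W B_def using Npos by (simp add: field_simps)
    qed
  next
    case False
    define p where "p = j + (K + 1) - N"
    have p: "p < N" "j + (K + 1) = N + p" using False j NK by (auto simp: p_def)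
    have "(\<Sum>i=j..j+K. y (i mod N)) = (\<Sum>i\<in>{j..<N}. y (i mod N)) + (\<Sum>i\<in>{N..<N + p}. y (i mod N))"
      unfolding ivl p(2) using j by (intro sum.atLeastLessThan_concat[symmetric]) auto
    also have "(\<Sum>i\<in>{j..<N}. y (i mod N)) = (\<Sum>i\<in>{j..<N}. y i)"
      by (intro sum.cong) auto
    also have "\<dots> = T - (\<Sum>i<j. y i)" unfolding T_def by (rule sum_ivl_split) (use j in simp)
    also have "(\<Sum>i\<in>{N..<N + p}. y (i mod N)) = (\<Sum>i\<in>{0..<p}. y ((i + N) mod N))"
      using sum.shift_bounds_nat_ivl[of "\<lambda>i. y (i mod N)" 0 N p] by (simp add: add.commute)
    also have "\<dots> = (\<Sum>i<p. y i)"
      using p(1) by (simp add: atLeast0LessThan)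
    finally have W: "(\<Sum>i=j..j+K. y (i mod N)) = T - (\<Sum>i<j. y i) + (\<Sum>i<p. y i)" .
    show ?thesis
    proof (intro exI conjI)
      show "p \<le> N" using p by simp
      show "j \<le> N" using j by simp
      have rp: "real p = real j + real (K + 1) - real N" using p(2) by linarith
      show "(\<Sum>i=j..j+K. y (i mod N)) - real (K + 1) / real N * T = B p - B j"
        unfolding W B_def rp using Npos by (simp add: field_simps)
    qed
  qed
qed

lemma Xvar_meas:
  assumes N: "N > 0"
  shows "(\<lambda>Y. X_var N K Y j) \<in> borel_measurable (iid_std_normal N)"
proof -
  have c: "(\<lambda>Y. Y (i mod N)) \<in> borel_measurable (Pi\<^sub>M {..<N} (\<lambda>_. nu))" for i
    by (rule comp_meas) (use N in simp)
  have s1: "(\<lambda>Y. \<Sum>i=j..j+K. Y (i mod N)) \<in> borel_measurable (Pi\<^sub>M {..<N} (\<lambda>_. nu))"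
    by (rule borel_measurable_sum) (rule c)
  have s2: "(\<lambda>Y. \<Sum>i<N. Y i) \<in> borel_measurable (Pi\<^sub>M {..<N} (\<lambda>_. nu))"
    by (rule psum_meas) simp
  show ?thesis unfolding X_var_def t_stat_def iid_std_normal_def
    using s1 s2 by measurable
qed

lemma G2_sets:
  assumes N: "N > 0"
  shows "G2_event N K \<in> sets (iid_std_normal N)"
proof -
  have "G2_event N K = {Y \<in> space (iid_std_normal N). \<forall>j\<in>{..<N}. \<bar>X_var N K Y j\<bar> \<le> 1}"
    unfolding G2_event_def by auto
  also have "\<dots> \<in> sets (iid_std_normal N)"
  proof (rule sets.sets_Collect_finite_All)
    fix j assume "j \<in> {..<N}"
    have "(\<lambda>Y. \<bar>X_var N K Y j\<bar>) \<in> borel_measurable (iid_std_normal N)"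
      using Xvar_meas[OF N] by measurable
    then show "{Y \<in> space (iid_std_normal N). \<bar>X_var N K Y j\<bar> \<le> 1} \<in> sets (iid_std_normal N)"
      by measurable
  qed simp
  finally show ?thesis .
qed

theorem lemma3p2:
  fixes N K :: nat
  assumes "K \<ge> 1" and "N \<ge> K + 2"
  shows "measure (iid_std_normal N) (G2_event N K) > 0 \<and>
         ln (measure (iid_std_normal N) (G2_event N K)) \<ge> - (pi\<^sup>2 / 2) * (real N / real K)"
proof -
  obtain n where n: "N = Suc n" using assms by (cases N) auto
  have n3: "N \<ge> 3" using assms by simp
  define L where "L = real K + 1"
  have L: "L > 0" "L = real (K + 1)" by (auto simp: L_def)
  define a where "a = sqrt L / 2"
  have a: "a > 0" using L by (simp add: a_def)
  have a2: "2 * a = sqrt L" by (simp add: a_def)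
  define M where "M = iid_std_normal N"
  have M: "M = Pi\<^sub>M {..<Suc n} (\<lambda>_. nu)" by (simp add: M_def iid_std_normal_def n)
  interpret P: prob_space M unfolding M by (rule prob_space_PiM) (rule nu_prob)
  define A where "A = {y \<in> space M. \<forall>k\<in>{1..n}. \<bar>(\<Sum>i<k. y i) - real k / real (Suc n) * (\<Sum>i<Suc n. y i)\<bar> \<le> a}"
  have As: "A \<in> sets M" and eA: "emeasure M A = ennreal (sqrt (2 * pi * real (Suc n))) * (Kop a 1 ^^ n) phi0 0"
    using main_identity[of n a] by (simp_all add: A_def M)
  define \<theta> where "\<theta> = (pi / (2*a))\<^sup>2 / 2"
  have \<theta>: "\<theta> = pi\<^sup>2 / (2 * L)"
    using L by (simp add: \<theta>_def a_def power_divide field_simps)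
  have I: "(Kop a 1 ^^ n) phi0 0 \<ge> ennreal (exp (- \<theta> * N) / (2 * a))"
    using I_bound[OF a n3] by (simp add: n \<theta>_def)
  have "emeasure M A \<ge> ennreal (sqrt (2 * pi * real N)) * ennreal (exp (- \<theta> * N) / (2 * a))"
    unfolding eA n by (intro mult_left_mono I[unfolded n]) simp
  moreover have "ennreal (sqrt (2 * pi * real N)) * ennreal (exp (- \<theta> * N) / (2 * a))
      = ennreal (sqrt (2 * pi * real N) * (exp (- \<theta> * N) / (2 * a)))"
    by (rule ennreal_mult[symmetric]) (use a in auto)
  ultimately have "ennreal (P.prob A) \<ge> ennreal (sqrt (2 * pi * real N) * (exp (- \<theta> * N) / (2 * a)))"
    by (simp add: P.emeasure_eq_measure)
  then have pA: "P.prob A \<ge> sqrt (2 * pi * real N) * (exp (- \<theta> * N) / (2 * a))"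
    by (subst (asm) ennreal_le_iff) auto
  have "sqrt (2 * pi * real N) * (exp (- \<theta> * N) / (2 * a)) = sqrt (2 * pi * real N) / sqrt L * exp (- \<theta> * N)"
    unfolding a2 by simp
  also have "sqrt (2 * pi * real N) / sqrt L \<ge> 1"
  proof -
    have "L \<le> real N" using assms by (simp add: L_def)
    also have "real N \<le> 2 * pi * real N"
    proof -
      have "1 * real N \<le> (2 * pi) * real N" using pi_gt3 by (intro mult_right_mono) auto
      then show ?thesis by simp
    qed
    finally have "sqrt L \<le> sqrt (2 * pi * real N)" by simp
    then show ?thesis using L by simp
  qed
  then have "sqrt (2 * pi * real N) / sqrt L * exp (- \<theta> * N) \<ge> exp (- \<theta> * N)"
    using mult_right_mono[of 1 "sqrt (2 * pi * real N) / sqrt L" "exp (- \<theta> * N)"] by simp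
  moreover have "exp (- \<theta> * N) \<ge> exp (- (pi\<^sup>2 / 2) * (real N / real K))"
  proof -
    have "\<theta> \<le> pi\<^sup>2 / (2 * real K)" unfolding \<theta> using assms L
      by (intro divide_left_mono) (auto simp: L_def)
    then have "\<theta> * N \<le> pi\<^sup>2 / (2 * real K) * N" by (rule mult_right_mono) simp
    then show ?thesis by (simp add: field_simps)
  qed
  ultimately have pA2: "P.prob A \<ge> exp (- (pi\<^sup>2 / 2) * (real N / real K))"
    using pA by linarith
  have sub: "A \<subseteq> G2_event N K"
  proof
    fix y assume yA: "y \<in> A"
    define T where "T = (\<Sum>i<N. y i)"
    define B where "B = (\<lambda>k. (\<Sum>i<k. y i) - real k / real N * T)"
    have Bb: "\<bar>B k\<bar> \<le> a" if "k \<le> N" for k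
    proof (cases "k = 0 \<or> k = N")
      case True then show ?thesis using a by (auto simp: B_def T_def)
    next
      case False
      then have "k \<in> {1..n}" using that n by auto
      then show ?thesis using yA unfolding A_def B_def T_def n by auto
    qed
    have "y \<in> space (iid_std_normal N)" using yA by (simp add: A_def M_def)
    moreover have "\<bar>X_var N K y j\<bar> \<le> 1" if j: "j < N" for j
    proof -
      obtain p q where pq: "p \<le> N" "q \<le> N"
        and W: "(\<Sum>i=j..j+K. y (i mod N)) - real (K + 1) / real N * T = B p - B q"
        using window_identity[OF assms(2) j, of y] unfolding T_def B_def by blast
      have "\<bar>B p - B q\<bar> \<le> 2 * a" using Bb[OF pq(1)] Bb[OF pq(2)] by linarith
      also have "\<dots> = sqrt L" by (rule a2)
      finally have W2: "\<bar>(\<Sum>i=j..j+K. y (i mod N)) - real (K + 1) / real N * T\<bar> \<le> sqrt L" using W by simp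
      have tt: "(real K + 1) / sqrt (real N) * t_stat N y = real (K + 1) / real N * T"
        unfolding t_stat_def T_def using n by (simp add: field_simps)
      have "\<bar>X_var N K y j\<bar> = \<bar>(\<Sum>i=j..j+K. y (i mod N)) - real (K + 1) / real N * T\<bar> / sqrt L"
        unfolding X_var_def tt L_def by (simp add: abs_divide)
      also have "\<dots> \<le> 1" using W2 L by simp
      finally show ?thesis .
    qed
    ultimately show "y \<in> G2_event N K" unfolding G2_event_def by auto
  qed
  have G2s: "G2_event N K \<in> sets M" unfolding M_def by (rule G2_sets) (simp add: n)
  have "P.prob (G2_event N K) \<ge> P.prob A" by (rule P.finite_measure_mono[OF sub G2s])
  with pA2 have fin: "P.prob (G2_event N K) \<ge> exp (- (pi\<^sup>2 / 2) * (real N / real K))" by linarith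
  have pos: "P.prob (G2_event N K) > 0"
    using fin exp_gt_zero[of "- (pi\<^sup>2 / 2) * (real N / real K)"] by linarith
  have "ln (P.prob (G2_event N K)) \<ge> ln (exp (- (pi\<^sup>2 / 2) * (real N / real K)))"
    using fin pos by (subst ln_le_cancel_iff) auto
  then show ?thesis using pos by (simp add: M_def)
qed


end
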